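(* Let $\mathcal{P}$ be the set of sequences $\boldsymbol{b}=(b_k)_{k\geq1}$ with $b_k\in\{0,1,2,3\}$ such that $b_k=g_k$ for all but finitely many $k$, where $g_k=3$ for $k$ odd and $g_k=0$ for $k$ even. Let $H(a,b)=\max(a-3,-b)$ for $a,b\in\{0,1,2,3\}$, and for $\boldsymbol{b}\in\mathcal{P}$ put \[ \ell_H(\boldsymbol{b})=\sum_{k\geq1}\big(H(b_{k+1},b_k)-H(g_{k+1},g_k)\big),\qquad \ell(\boldsymbol{b})=2\ell_H(\boldsymbol{b})-(3-b_1), \] \[ |\boldsymbol{b}|=\sum_{k\geq1}(b_k-g_k)+2\sum_{k\geq1}k\big(H(b_{k+1},b_k)-H(g_{k+1},g_k)\big). \] Let $J(x,q)=\sum_{\boldsymbol{b}\in\mathcal{P}}x^{\ell(\boldsymbol{b})}q^{|\boldsymbol{b}|}$. Then \[ qJ(x,q) = (1+xq)(1+q-xq+x^2q^3)\,J(xq,q)-(1+xq^2)(1-x^2q^2)\,J(xq^{2},q). \]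
   Context: Here $\mathcal{P}$ is the Kyoto path realization of the $A^{(1)}_1$ highest weight crystal $B(3\Lambda_0)$ using the Kirillov–Reshetikhin perfect crystal $B^{1,3}=\{0,1,2,3\}$ (with $\tilde f_1: a\mapsto a+1$, $\tilde f_0:a\mapsto a-1$), whose ground-state path is $\cdots\otimes 0\otimes 3\otimes 0\otimes 3$; $|\boldsymbol{b}|\ge 0$ is the number of Kashiwara lowering operators needed to reach $\boldsymbol{b}$ from the ground-state path. $J$ is a formal power series in $q$ with Laurent polynomial coefficients in $x$. *)

theory Defs
  imports Main
begin

(* Paths b = (b_k)_{k>=1}, represented as functions nat => nat; the unused
   entry b 0 is normalised to 0 so that each path has a unique representative. *)

definition g :: "nat \<Rightarrow> nat" where
  "g k = (if odd k then 3 else 0)"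

definition H :: "nat \<Rightarrow> nat \<Rightarrow> int" where
  "H a b = max (int a - 3) (- int b)"

definition paths :: "(nat \<Rightarrow> nat) set" where
  "paths = {b. b 0 = 0 \<and> (\<forall>k\<ge>1. b k \<le> 3) \<and> finite {k. 1 \<le> k \<and> b k \<noteq> g k}}"

(* indices k >= 1 at which the summands of the (formally infinite) sums may be nonzero;
   all summands vanish outside this finite set *)
definition relidx :: "(nat \<Rightarrow> nat) \<Rightarrow> nat set" where
  "relidx b = {k. 1 \<le> k \<and> (b k \<noteq> g k \<or> b (k+1) \<noteq> g (k+1))}"

definition Hdiff :: "(nat \<Rightarrow> nat) \<Rightarrow> nat \<Rightarrow> int" where
  "Hdiff b k = H (b (k+1)) (b k) - H (g (k+1)) (g k)"

definition ellH :: "(nat \<Rightarrow> nat) \<Rightarrow> int" where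
  "ellH b = (\<Sum>k\<in>relidx b. Hdiff b k)"

definition ell :: "(nat \<Rightarrow> nat) \<Rightarrow> int" where
  "ell b = 2 * ellH b - (3 - int (b 1))"

definition wt :: "(nat \<Rightarrow> nat) \<Rightarrow> int" where
  "wt b = (\<Sum>k\<in>relidx b. int (b k) - int (g k))
          + 2 * (\<Sum>k\<in>relidx b. int k * Hdiff b k)"

(* J(x,q) = sum_{b in P} x^ell(b) q^|b| encoded by its coefficient array:
   Jc m n = coefficient of x^m q^n *)
definition Jc :: "int \<Rightarrow> int \<Rightarrow> int" where
  "Jc m n = int (card {b \<in> paths. ell b = m \<and> wt b = n})"

(* Bivariate Laurent polynomials in x,q as lists of monomials (c,i,j) = c x^i q^j;
   series as coefficient arrays int => int => int (x-exponent, q-exponent). *)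
type_synonym lpoly = "(int \<times> int \<times> int) list"
type_synonym series = "int \<Rightarrow> int \<Rightarrow> int"

definition ptimes :: "lpoly \<Rightarrow> lpoly \<Rightarrow> lpoly" where
  "ptimes P Q = [(c*d, i+k, j+l). (c,i,j) \<leftarrow> P, (d,k,l) \<leftarrow> Q]"

definition pmul :: "lpoly \<Rightarrow> series \<Rightarrow> series" where
  "pmul P F = (\<lambda>m n. (\<Sum>(c,i,j)\<leftarrow>P. c * F (m - i) (n - j)))"

(* substitution x := x q^s : coefficient of x^m q^n in F(x q^s, q) is F_{m, n - s m} *)
definition subst_xq :: "int \<Rightarrow> series \<Rightarrow> series" where
  "subst_xq s F = (\<lambda>m n. F m (n - s * m))"

end

theory Submission
  imports Defs
begin


definition e :: "(nat \<Rightarrow> nat) \<Rightarrow> nat \<Rightarrow> int" where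
  "e b k = \<bar>int (b k) + int (b (Suc k)) - 3\<bar>"

lemma g_sum: "int (g k) + int (g (Suc k)) = 3"
  by (simp add: g_def)

lemma g_le: "g k \<le> 3" by (simp add: g_def)
lemma g0: "g 0 = 0" by (simp add: g_def)

lemma Hdiff2: "2 * Hdiff b k = ((int (b (Suc k)) - int (g (Suc k))) - (int (b k) - int (g k))) + e b k"
  unfolding Hdiff_def H_def e_def g_def by (cases "odd k") (simp_all, arith+)

lemma paths_bound:
  assumes "b \<in> paths" shows "\<exists>N\<ge>1. \<forall>k\<ge>N. b k = g k"
proof -
  have "finite {k. 1 \<le> k \<and> b k \<noteq> g k}" using assms by (simp add: paths_def)
  then obtain M where M: "\<forall>k\<in>{k. 1 \<le> k \<and> b k \<noteq> g k}. k \<le> M"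
    using finite_nat_set_iff_bounded_le by blast
  have "\<forall>k\<ge>Suc M. b k = g k"
  proof (intro allI impI)
    fix k assume k: "Suc M \<le> k"
    show "b k = g k"
    proof (rule ccontr)
      assume "b k \<noteq> g k"
      then have "k \<le> M" using M k by auto
      then show False using k by simp
    qed
  qed
  then show ?thesis by (intro exI[of _ "Suc M"]) simp
qed

lemma tele1: "1 \<le> N \<Longrightarrow> (\<Sum>k\<in>{1..<N}. f (Suc k) - f k) = f N - (f 1 :: int)"
proof (induction N)
  case 0 then show ?case by simp
next
  case (Suc N)
  show ?case
  proof (cases "N = 0")
    case True then show ?thesis by simp
  next
    case False
    then have "1 \<le> N" by simp
    then show ?thesis using Suc by (simp add: sum.atLeastLessThan_Suc)
  qed
qed

lemma tele2: "1 \<le> N \<Longrightarrow> (\<Sum>k\<in>{1..<N}. int k * (f (Suc k) - f k)) = (int N - 1) * f N - (\<Sum>k\<in>{1..<N}. f k :: int)"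
proof (induction N)
  case 0 then show ?case by simp
next
  case (Suc N)
  show ?case
  proof (cases "N = 0")
    case True then show ?thesis by simp
  next
    case False
    then have "1 \<le> N" by simp
    then show ?thesis using Suc by (simp add: sum.atLeastLessThan_Suc algebra_simps)
  qed
qed

lemma relidx_sub:
  assumes "\<forall>k\<ge>N. b k = g k" shows "relidx b \<subseteq> {1..<N}"
proof
  fix k assume "k \<in> relidx b"
  then have k: "1 \<le> k" "b k \<noteq> g k \<or> b (k+1) \<noteq> g (k+1)" by (auto simp: relidx_def)
  have "k < N"
  proof (rule ccontr)
    assume "\<not> k < N"
    then have "N \<le> k" "N \<le> k+1" by auto
    then show False using k(2) assms by auto
  qed
  then show "k \<in> {1..<N}" using k by simp
qed

lemma sum_relidx:
  assumes "\<forall>k\<ge>N. b k = g k"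
    and "\<And>k. b k = g k \<Longrightarrow> b (Suc k) = g (Suc k) \<Longrightarrow> f k = 0"
  shows "(\<Sum>k\<in>relidx b. f k) = (\<Sum>k\<in>{1..<N}. f k)"
  apply (rule sum.mono_neutral_left)
  using relidx_sub[OF assms(1)] assms(2) by (auto simp: relidx_def)

lemma ell_e:
  assumes "b \<in> paths" "\<forall>k\<ge>N. b k = g k" "1 \<le> N"
  shows "ell b = (\<Sum>k\<in>{1..<N}. e b k)"
proof -
  define d where "d k = int (b k) - int (g k)" for k
  have "ellH b = (\<Sum>k\<in>{1..<N}. Hdiff b k)"
    unfolding ellH_def by (rule sum_relidx[OF assms(2)]) (simp add: Hdiff_def)
  then have "2 * ellH b = (\<Sum>k\<in>{1..<N}. (d (Suc k) - d k) + e b k)"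
    by (simp add: sum_distrib_left Hdiff2 d_def)
  also have "\<dots> = d N - d 1 + (\<Sum>k\<in>{1..<N}. e b k)"
    using tele1[OF assms(3), of d] by (simp only: sum.distrib)
  finally show ?thesis using assms(2) unfolding ell_def d_def by (simp add: g_def)
qed

lemma wt_e:
  assumes "b \<in> paths" "\<forall>k\<ge>N. b k = g k" "1 \<le> N"
  shows "wt b = (\<Sum>k\<in>{1..<N}. int k * e b k)"
proof -
  define d where "d k = int (b k) - int (g k)" for k
  have 1: "(\<Sum>k\<in>relidx b. int (b k) - int (g k)) = (\<Sum>k\<in>{1..<N}. d k)"
    unfolding d_def by (rule sum_relidx[OF assms(2)]) simp
  have 2: "(\<Sum>k\<in>relidx b. int k * Hdiff b k) = (\<Sum>k\<in>{1..<N}. int k * Hdiff b k)"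
    by (rule sum_relidx[OF assms(2)]) (simp add: Hdiff_def)
  have h: "int k * (2 * Hdiff b k) = int k * (d (Suc k) - d k) + int k * e b k" for k
    unfolding Hdiff2 d_def by (simp add: algebra_simps)
  have "2 * (\<Sum>k\<in>{1..<N}. int k * Hdiff b k) = (\<Sum>k\<in>{1..<N}. int k * (2 * Hdiff b k))"
    by (simp add: sum_distrib_left mult.left_commute)
  also have "\<dots> = (\<Sum>k\<in>{1..<N}. int k * (d (Suc k) - d k) + int k * e b k)"
    by (simp only: h)
  also have "\<dots> = (int N - 1) * d N - (\<Sum>k\<in>{1..<N}. d k) + (\<Sum>k\<in>{1..<N}. int k * e b k)"
    using tele2[OF assms(3), of d] by (simp only: sum.distrib)
  finally show ?thesis using assms(2) unfolding wt_def 1 2 by (simp add: d_def)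
qed



definition sig :: "(nat \<Rightarrow> nat) \<Rightarrow> nat \<Rightarrow> nat" where
  "sig b = (\<lambda>k. if k = 0 then 0 else 3 - b (Suc k))"

definition cns :: "nat \<Rightarrow> (nat \<Rightarrow> nat) \<Rightarrow> nat \<Rightarrow> nat" where
  "cns a c = (\<lambda>k. if k = 0 then 0 else if k = 1 then a else 3 - c (k - 1))"

lemma paths_le: "b \<in> paths \<Longrightarrow> b k \<le> 3"
  by (cases k) (auto simp: paths_def)

lemma paths0: "b \<in> paths \<Longrightarrow> b 0 = 0"
  by (auto simp: paths_def)

lemma g_flip: "3 - g (Suc k) = g k" "3 - g k = g (Suc k)"
  by (auto simp: g_def)

lemma sig_paths:
  assumes "b \<in> paths" shows "sig b \<in> paths"
proof -
  have fin: "finite {k. 1 \<le> k \<and> b k \<noteq> g k}" using assms by (simp add: paths_def)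
  have "{k. 1 \<le> k \<and> sig b k \<noteq> g k} \<subseteq> (\<lambda>j. j - 1) ` {k. 1 \<le> k \<and> b k \<noteq> g k}"
  proof
    fix k assume "k \<in> {k. 1 \<le> k \<and> sig b k \<noteq> g k}"
    then have k: "1 \<le> k" "3 - b (Suc k) \<noteq> g k" by (auto simp: sig_def)
    have "b (Suc k) \<noteq> g (Suc k)" using k(2) g_flip(1)[of k] by auto
    then show "k \<in> (\<lambda>j. j - 1) ` {k. 1 \<le> k \<and> b k \<noteq> g k}"
      by (intro image_eqI[of _ _ "Suc k"]) auto
  qed
  then have "finite {k. 1 \<le> k \<and> sig b k \<noteq> g k}" using fin finite_subset by blast
  then show ?thesis by (simp add: paths_def sig_def)
qed

lemma cns_paths:
  assumes "c \<in> paths" "a \<le> 3" shows "cns a c \<in> paths"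
proof -
  have fin: "finite {k. 1 \<le> k \<and> c k \<noteq> g k}" using assms by (simp add: paths_def)
  have "{k. 1 \<le> k \<and> cns a c k \<noteq> g k} \<subseteq> insert 1 (Suc ` {k. 1 \<le> k \<and> c k \<noteq> g k})"
  proof
    fix k assume "k \<in> {k. 1 \<le> k \<and> cns a c k \<noteq> g k}"
    then have k: "1 \<le> k" "cns a c k \<noteq> g k" by auto
    show "k \<in> insert 1 (Suc ` {k. 1 \<le> k \<and> c k \<noteq> g k})"
    proof (cases "k = 1")
      case True then show ?thesis by simp
    next
      case False
      then obtain j where j: "k = Suc j" "1 \<le> j" using k(1) by (cases k) auto
      have "3 - c j \<noteq> g (Suc j)" using k(2) j by (simp add: cns_def)
      then have "c j \<noteq> g j" using g_flip(2)[of j] by auto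
      then show ?thesis using j by auto
    qed
  qed
  then have "finite {k. 1 \<le> k \<and> cns a c k \<noteq> g k}" using fin finite_subset by blast
  then show ?thesis using assms by (simp add: paths_def cns_def)
qed

lemma sig_cns: "c \<in> paths \<Longrightarrow> sig (cns a c) = c"
  by (rule ext) (auto simp: sig_def cns_def paths0 paths_le diff_diff_cancel)

lemma cns_sig: "b \<in> paths \<Longrightarrow> cns (b 1) (sig b) = b"
proof (rule ext)
  fix k assume b: "b \<in> paths"
  show "cns (b 1) (sig b) k = b k"
  proof (cases k)
    case 0 then show ?thesis using b by (simp add: cns_def paths0)
  next
    case (Suc j)
    then show ?thesis using b paths_le[OF b, of k] by (cases j) (auto simp: cns_def sig_def)
  qed
qed

lemma e_sig: "b \<in> paths \<Longrightarrow> 1 \<le> k \<Longrightarrow> e (sig b) k = e b (Suc k)"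
  using paths_le[of b "Suc k"] paths_le[of b "Suc (Suc k)"]
  by (simp add: e_def sig_def of_nat_diff abs_minus_commute)

lemma sig_bound: "\<forall>k\<ge>N. b k = g k \<Longrightarrow> 1 \<le> N \<Longrightarrow> \<forall>k\<ge>N. sig b k = g k"
  by (auto simp: sig_def g_def)

lemma sig_stats:
  assumes b: "b \<in> paths"
  shows "ell (sig b) = ell b - e b 1" "wt (sig b) = wt b - ell b"
proof -
  obtain N where N: "1 \<le> N" "\<forall>k\<ge>N. b k = g k" using paths_bound[OF b] by auto
  have N1: "\<forall>k\<ge>Suc N. b k = g k" using N by auto
  have sN: "\<forall>k\<ge>N. sig b k = g k" using sig_bound N by blast
  have sb: "sig b \<in> paths" using sig_paths b by blast
  have es: "(\<Sum>k\<in>{1..<N}. f k (e (sig b) k)) = (\<Sum>k\<in>{1..<N}. f k (e b (Suc k)))" for f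
    by (rule sum.cong) (auto simp: e_sig[OF b])
  have sh: "(\<Sum>k\<in>{Suc 1..<Suc N}. h k) = (\<Sum>k\<in>{1..<N}. h (Suc k))" for h :: "nat \<Rightarrow> int"
    by (rule sum.shift_bounds_Suc_ivl)
  have spl: "(\<Sum>k\<in>{1..<Suc N}. h k) = h 1 + (\<Sum>k\<in>{Suc 1..<Suc N}. h k)" for h :: "nat \<Rightarrow> int"
    using N by (subst sum.atLeast_Suc_lessThan) auto
  have l1: "ell (sig b) = (\<Sum>k\<in>{1..<N}. e b (Suc k))"
    using ell_e[OF sb sN N(1)] es[of "\<lambda>k x. x"] by simp
  have l2: "ell b = (\<Sum>k\<in>{1..<Suc N}. e b k)" using ell_e[OF b N1] by simp
  show "ell (sig b) = ell b - e b 1"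
    using l1 l2 spl[of "e b"] sh[of "e b"] by simp
  have w1: "wt (sig b) = (\<Sum>k\<in>{1..<N}. int k * e b (Suc k))"
    using wt_e[OF sb sN N(1)] es[of "\<lambda>k x. int k * x"] by simp
  have w2: "wt b - ell b = (\<Sum>k\<in>{1..<Suc N}. (int k - 1) * e b k)"
    using wt_e[OF b N1] l2 by (simp add: sum_subtractf algebra_simps)
  show "wt (sig b) = wt b - ell b"
    using w1 w2 spl[of "\<lambda>k. (int k - 1) * e b k"] sh[of "\<lambda>k. (int k - 1) * e b k"] by simp
qed

lemma e1: "b \<in> paths \<Longrightarrow> e b 1 = \<bar>int (b 1) - int (sig b 1)\<bar>"
  using paths_le[of b 2] by (simp add: e_def sig_def of_nat_diff numeral_2_eq_2)

lemma cns_stats: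
  assumes c: "c \<in> paths" and a: "a \<le> 3"
  shows "ell (cns a c) = ell c + \<bar>int a - int (c 1)\<bar>"
        "wt (cns a c) = wt c + ell c + \<bar>int a - int (c 1)\<bar>"
proof -
  have b: "cns a c \<in> paths" using cns_paths[OF c a] .
  have s: "sig (cns a c) = c" using sig_cns[OF c] .
  have "cns a c 1 = a" by (simp add: cns_def)
  then have "e (cns a c) 1 = \<bar>int a - int (c 1)\<bar>" using e1[OF b] s by simp
  then show "ell (cns a c) = ell c + \<bar>int a - int (c 1)\<bar>"
       "wt (cns a c) = wt c + ell c + \<bar>int a - int (c 1)\<bar>"
    using sig_stats[OF b] s by simp_all
qed



lemma e_nonneg: "0 \<le> e b k" by (simp add: e_def)

lemma dev_le_wt:
  assumes b: "b \<in> paths" and k: "1 \<le> k" "b k \<noteq> g k"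
  shows "int k \<le> wt b"
proof -
  define D where "D = {k. 1 \<le> k \<and> b k \<noteq> g k}"
  have fD: "finite D" using b by (simp add: paths_def D_def)
  have kD: "k \<in> D" using k by (simp add: D_def)
  define K where "K = Max D"
  have "D \<noteq> {}" using kD by auto
  then have KD: "K \<in> D" using fD by (simp add: K_def)
  have kK: "k \<le> K" using fD kD by (simp add: K_def)
  have aboveK: "\<forall>j\<ge>Suc K. b j = g j"
  proof (intro allI impI)
    fix j assume j: "Suc K \<le> j"
    show "b j = g j"
    proof (rule ccontr)
      assume "b j \<noteq> g j"
      then have "j \<in> D" using j by (simp add: D_def)
      then have "j \<le> K" using fD by (simp add: K_def)
      then show False using j by simp
    qed
  qed
  have K1: "1 \<le> K" "b K \<noteq> g K" using KD by (auto simp: D_def)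
  have "e b K = \<bar>int (b K) + int (g (Suc K)) - 3\<bar>" using aboveK by (simp add: e_def)
  also have "\<dots> = \<bar>int (b K) - int (g K)\<bar>" using g_sum[of K] by simp
  finally have eK: "1 \<le> e b K" using K1(2) by simp
  have "wt b = (\<Sum>j\<in>{1..<Suc K}. int j * e b j)" using wt_e[OF b aboveK] by simp
  also have "\<dots> \<ge> int K * e b K"
    by (rule member_le_sum) (use K1 in \<open>auto intro: mult_nonneg_nonneg e_nonneg\<close>)
  finally have "int K * e b K \<le> wt b" .
  moreover have "int K \<le> int K * e b K" using eK K1 by simp
  ultimately show ?thesis using kK by linarith
qed

lemma finite_bounded_funs: "finite {b :: nat \<Rightarrow> nat. (\<forall>k. b k \<le> 3) \<and> (\<forall>k>N. b k = g k)}"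
proof -
  let ?S = "{b :: nat \<Rightarrow> nat. (\<forall>k. b k \<le> 3) \<and> (\<forall>k>N. b k = g k)}"
  let ?f = "\<lambda>b. map b [0..<Suc N]"
  have "inj_on ?f ?S"
  proof (rule inj_onI)
    fix b c assume bc: "b \<in> ?S" "c \<in> ?S" "?f b = ?f c"
    show "b = c"
    proof (rule ext)
      fix k
      show "b k = c k"
      proof (cases "k \<le> N")
        case True
        have "?f b ! k = b k" "?f c ! k = c k" using True by (subst nth_map_upt; simp)+
        then show ?thesis using bc(3) by metis
      next
        case False then show ?thesis using bc by auto
      qed
    qed
  qed
  moreover have "?f ` ?S \<subseteq> {xs. set xs \<subseteq> {0..3} \<and> length xs = Suc N}" by auto
  moreover have "finite {xs. set xs \<subseteq> {0..3::nat} \<and> length xs = Suc N}"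
    by (rule finite_lists_length_eq) simp
  ultimately show ?thesis by (rule inj_on_finite)
qed

lemma finite_wt: "finite {b \<in> paths. wt b = n}"
proof -
  have "{b \<in> paths. wt b = n} \<subseteq> {b. (\<forall>k. b k \<le> 3) \<and> (\<forall>k>nat n. b k = g k)}"
  proof
    fix b assume b: "b \<in> {b \<in> paths. wt b = n}"
    then have bp: "b \<in> paths" and w: "wt b = n" by auto
    have "\<forall>k>nat n. b k = g k"
    proof (intro allI impI)
      fix k assume k: "nat n < k"
      show "b k = g k"
      proof (rule ccontr)
        assume "b k \<noteq> g k"
        then have "int k \<le> n" using dev_le_wt[OF bp, of k] k w by simp
        then show False using k by simp
      qed
    qed
    then show "b \<in> {b. (\<forall>k. b k \<le> 3) \<and> (\<forall>k>nat n. b k = g k)}" using paths_le[OF bp] by auto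
  qed
  then show ?thesis using finite_bounded_funs finite_subset by blast
qed

definition AS :: "nat \<Rightarrow> int \<Rightarrow> int \<Rightarrow> (nat \<Rightarrow> nat) set" where
  "AS a m n = {b \<in> paths. b 1 = a \<and> ell b = m \<and> wt b = n}"

definition Ac :: "nat \<Rightarrow> int \<Rightarrow> int \<Rightarrow> int" where
  "Ac a m n = int (card (AS a m n))"

lemma finite_AS: "finite (AS a m n)"
  by (rule finite_subset[OF _ finite_wt[of n]]) (auto simp: AS_def)

lemma Jc_sum: "Jc m n = (\<Sum>a<4. Ac a m n)"
proof -
  have eq: "{b \<in> paths. ell b = m \<and> wt b = n} = (\<Union>a\<in>{..<4}. AS a m n)"
  proof (rule set_eqI)
    fix b
    show "b \<in> {b \<in> paths. ell b = m \<and> wt b = n} \<longleftrightarrow> b \<in> (\<Union>a\<in>{..<4}. AS a m n)"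
    proof
      assume b: "b \<in> {b \<in> paths. ell b = m \<and> wt b = n}"
      then have "b 1 < 4" using paths_le[of b 1] by auto
      then show "b \<in> (\<Union>a\<in>{..<4}. AS a m n)" using b by (auto simp: AS_def intro!: UN_I[of "b 1"])
    next
      assume "b \<in> (\<Union>a\<in>{..<4}. AS a m n)"
      then show "b \<in> {b \<in> paths. ell b = m \<and> wt b = n}" by (auto simp: AS_def)
    qed
  qed
  have "card (\<Union>a\<in>{..<4}. AS a m n) = (\<Sum>a<4. card (AS a m n))"
    apply (rule card_UN_disjoint)
      apply simp
     apply (simp add: finite_AS)
    apply (auto simp: AS_def)
    done
  then show ?thesis unfolding Jc_def Ac_def eq by simp
qed

lemma AS_rec:
  assumes a: "a < 4"
  shows "AS a m n = cns a ` (\<Union>d\<in>{..<4}. AS d (m - \<bar>int a - int d\<bar>) (n - m))"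
proof
  show "AS a m n \<subseteq> cns a ` (\<Union>d\<in>{..<4}. AS d (m - \<bar>int a - int d\<bar>) (n - m))"
  proof
    fix b assume "b \<in> AS a m n"
    then have b: "b \<in> paths" "b 1 = a" "ell b = m" "wt b = n" by (auto simp: AS_def)
    have sp: "sig b \<in> paths" using sig_paths[OF b(1)] .
    have d: "sig b 1 < 4" using paths_le[OF sp, of 1] by simp
    have st: "ell (sig b) = m - \<bar>int a - int (sig b 1)\<bar>" "wt (sig b) = n - m"
      using sig_stats[OF b(1)] e1[OF b(1)] b by simp_all
    have "sig b \<in> (\<Union>d\<in>{..<4}. AS d (m - \<bar>int a - int d\<bar>) (n - m))"
      using d st sp by (auto simp: AS_def)
    moreover have "b = cns a (sig b)" using cns_sig[OF b(1)] b(2) by simp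
    ultimately show "b \<in> cns a ` (\<Union>d\<in>{..<4}. AS d (m - \<bar>int a - int d\<bar>) (n - m))" by blast
  qed
next
  show "cns a ` (\<Union>d\<in>{..<4}. AS d (m - \<bar>int a - int d\<bar>) (n - m)) \<subseteq> AS a m n"
  proof
    fix b assume "b \<in> cns a ` (\<Union>d\<in>{..<4}. AS d (m - \<bar>int a - int d\<bar>) (n - m))"
    then obtain c d where c: "c \<in> paths" "c 1 = d" "ell c = m - \<bar>int a - int d\<bar>" "wt c = n - m"
      and bc: "b = cns a c" by (auto simp: AS_def)
    have a3: "a \<le> 3" using a by simp
    show "b \<in> AS a m n"
      using cns_stats[OF c(1) a3] cns_paths[OF c(1) a3] c bc by (simp add: AS_def cns_def)
  qed
qed

lemma Ac_rec:
  assumes a: "a < 4"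
  shows "Ac a m n = (\<Sum>d<4. Ac d (m - \<bar>int a - int d\<bar>) (n - m))"
proof -
  have inj: "inj_on (cns a) paths"
    by (rule inj_on_inverseI[of _ sig]) (rule sig_cns)
  have sub: "(\<Union>d\<in>{..<4}. AS d (m - \<bar>int a - int d\<bar>) (n - m)) \<subseteq> paths" by (auto simp: AS_def)
  have "card (AS a m n) = card (\<Union>d\<in>{..<4}. AS d (m - \<bar>int a - int d\<bar>) (n - m))"
    unfolding AS_rec[OF a] by (rule card_image) (rule inj_on_subset[OF inj sub])
  also have "\<dots> = (\<Sum>d<4. card (AS d (m - \<bar>int a - int d\<bar>) (n - m)))"
    apply (rule card_UN_disjoint)
      apply simp
     apply (simp add: finite_AS)
    apply (auto simp: AS_def)
    done
  finally have "int (card (AS a m n)) = int (\<Sum>d<4. card (AS d (m - \<bar>int a - int d\<bar>) (n - m)))"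
    by (rule arg_cong)
  also have "\<dots> = (\<Sum>d<4. int (card (AS d (m - \<bar>int a - int d\<bar>) (n - m))))"
    by (rule of_nat_sum)
  finally show ?thesis unfolding Ac_def .
qed



lemma four: "{..<4::nat} = {0,1,2,3}" by auto

lemma J1: "Jc M N = (\<Sum>a\<in>{0,1,2,3::nat}. \<Sum>d\<in>{0,1,2,3::nat}. Ac d (M - \<bar>int a - int d\<bar>) (N - M))"
  unfolding Jc_sum four[symmetric] by (rule sum.cong) (simp_all add: Ac_rec)

lemma J2: "Jc M N = (\<Sum>a\<in>{0,1,2,3::nat}. \<Sum>d\<in>{0,1,2,3::nat}. \<Sum>e\<in>{0,1,2,3::nat}.
     Ac e (M - \<bar>int a - int d\<bar> - \<bar>int d - int e\<bar>) (N - M - (M - \<bar>int a - int d\<bar>)))"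
  unfolding J1 four[symmetric] by (intro sum.cong refl) (simp add: Ac_rec)

lemma F1: "subst_xq 1 Jc M N = (\<Sum>a\<in>{0,1,2,3::nat}. \<Sum>d\<in>{0,1,2,3::nat}. Ac d (M - \<bar>int a - int d\<bar>) (N - 2*M))"
  unfolding subst_xq_def J1 by simp

lemma F2: "subst_xq 2 Jc M N = (\<Sum>a\<in>{0,1,2,3::nat}. Ac a M (N - 2*M))"
  unfolding subst_xq_def Jc_sum four by simp

lemma main_eq: "pmul [(1,0,1)] Jc m n
   = pmul (ptimes [(1,0,0),(1,1,1)] [(1,0,0),(1,0,1),(-1,1,1),(1,2,3)]) (subst_xq 1 Jc) m n
   - pmul (ptimes [(1,0,0),(1,1,2)] [(1,0,0),(-1,2,2)]) (subst_xq 2 Jc) m n"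
proof -
  define Y where "Y e p r = Ac e (m - p) (n - 2*m + r)" for e p r
  have AY: "Ac e M N = Y e (m - M) (N - n + 2*m)" for e M N unfolding Y_def by simp
  have L: "pmul [(1,0,1)] Jc m n = Jc m (n - 1)" by (simp add: pmul_def)
  show ?thesis
    unfolding L
    apply (simp add: pmul_def ptimes_def F1 F2)
    apply (simp add: J2 AY)
    done
qed


theorem mainTheorem4:
  shows "(\<forall>n. finite {b \<in> paths. wt b = n})
    \<and> pmul [(1,0,1)] Jc
      = (\<lambda>m n. pmul (ptimes [(1,0,0),(1,1,1)] [(1,0,0),(1,0,1),(-1,1,1),(1,2,3)])
                      (subst_xq 1 Jc) m n
               - pmul (ptimes [(1,0,0),(1,1,2)] [(1,0,0),(-1,2,2)])
                      (subst_xq 2 Jc) m n)"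
  by (intro conjI allI ext finite_wt main_eq)

end
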